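(* Let $f_0$ be an arithmetic function and let $m\ge1$. For every $n\ge1$, \[f_m(n)=\sum_{i=1}^n m^{i-1}c_1(n,i).\]
   Context: An arithmetic function is a function $f_0:\{1,2,\ldots\}\to\mathbb{C}$. For $m\ge 1$, $f_m$ is the invert transform of $f_{m-1}$, i.e. $f_m(n)=f_{m-1}(n)+\sum_{i=1}^{n-1}f_{m-1}(i)f_m(n-i)$ for $n\ge1$. The numbers $c_1(n,k)$, $0\le k\le n$, are defined by $c_1(0,0)=1$, $c_1(n,0)=0$ for $n\ge1$, and $c_1(n,k)=\sum_{i=1}^{n-k+1}f_{0}(i)\,c_1(n-i,k-1)$ for $1\le k\le n$. *)

theory Defs
  imports Complex_Main
begin

text \<open>Arithmetic functions are modelled as functions nat => complex; the value at 0 is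
irrelevant (never used for n >= 1).\<close>

fun invert :: "(nat \<Rightarrow> complex) \<Rightarrow> nat \<Rightarrow> complex" where
  "invert g n = g n + (\<Sum>i\<in>{1..<n}. g i * (if n - i < n then invert g (n - i) else 0))"

declare invert.simps[simp del]

definition fm :: "(nat \<Rightarrow> complex) \<Rightarrow> nat \<Rightarrow> nat \<Rightarrow> complex" where
  "fm f0 m = (invert ^^ m) f0"

fun c1 :: "(nat \<Rightarrow> complex) \<Rightarrow> nat \<Rightarrow> nat \<Rightarrow> complex" where
  "c1 f0 n 0 = (if n = 0 then 1 else 0)"
| "c1 f0 n (Suc k) = (if Suc k \<le> n then (\<Sum>i\<in>{1..n - Suc k + 1}. f0 i * c1 f0 (n - i) k) else 0)"

end

theory Submission
  imports Defs "HOL-Computational_Algebra.Formal_Power_Series"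
begin

unbundle fps_syntax

definition FF :: "(nat \<Rightarrow> complex) \<Rightarrow> complex fps" where
  "FF f0 = fps_X * Abs_fps (\<lambda>n. f0 (Suc n))"

lemma FF_nth: "FF f0 $ n = (if n = 0 then 0 else f0 n)"
  unfolding FF_def by (cases n) (simp_all add: fps_X_mult_nth)

lemma FF_pow_nth_small: "j < k \<Longrightarrow> (FF f0 ^ k) $ j = 0"
  unfolding FF_def power_mult_distrib by (simp add: fps_X_power_mult_nth)

lemma c1_eq: "c1 f0 n k = (FF f0 ^ k) $ n"
proof (induction k arbitrary: n)
  case 0
  then show ?case by simp
next
  case (Suc k)
  have eq: "(FF f0 ^ Suc k) $ n = (\<Sum>i=0..n. FF f0 $ i * (FF f0 ^ k) $ (n - i))"
    by (simp add: fps_mult_nth)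
  show ?case
  proof (cases "Suc k \<le> n")
    case True
    have "(\<Sum>i=0..n. FF f0 $ i * (FF f0 ^ k) $ (n - i))
        = (\<Sum>i\<in>{1..n - Suc k + 1}. FF f0 $ i * (FF f0 ^ k) $ (n - i))"
    proof (rule sum.mono_neutral_right)
      show "\<forall>i\<in>{0..n} - {1..n - Suc k + 1}. FF f0 $ i * (FF f0 ^ k) $ (n - i) = 0"
      proof
        fix i assume i: "i \<in> {0..n} - {1..n - Suc k + 1}"
        show "FF f0 $ i * (FF f0 ^ k) $ (n - i) = 0"
        proof (cases "i = 0")
          case True then show ?thesis by (simp add: FF_nth)
        next
          case False
          with i True have "n - i < k" by auto
          then show ?thesis by (simp add: FF_pow_nth_small)
        qed
      qed
    qed (use True in auto)
    then show ?thesis using True eq Suc by (simp add: FF_nth)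
  next
    case False
    hence "(FF f0 ^ Suc k) $ n = 0" by (intro FF_pow_nth_small) simp
    then show ?thesis using False by simp
  qed
qed

definition GG :: "(nat \<Rightarrow> complex) \<Rightarrow> nat \<Rightarrow> complex fps" where
  "GG f0 m = FF f0 * inverse (1 - of_nat m * FF f0)"

lemma A_inv: "(1 - of_nat m * FF f0) * inverse (1 - of_nat m * FF f0) = 1"
  by (rule inverse_mult_eq_1') (simp add: FF_nth)

lemma GG_rec: "GG f0 (Suc m) = GG f0 m + GG f0 m * GG f0 (Suc m)"
proof -
  define F where "F = FF f0"
  define A where "A = 1 - of_nat m * F"
  define B where "B = 1 - of_nat (Suc m) * F"
  have a: "A * inverse A = 1" unfolding A_def F_def by (rule A_inv)
  have b: "B * inverse B = 1" unfolding B_def F_def by (rule A_inv)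
  have AB: "A = B + F" unfolding A_def B_def by (simp add: algebra_simps)
  have "F * inverse A + F * inverse A * (F * inverse B)
      = F * inverse A * (B * inverse B) + F * inverse A * (F * inverse B)"
    using b by simp
  also have "\<dots> = F * inverse A * inverse B * (B + F)"
    by algebra
  also have "\<dots> = F * inverse B * (A * inverse A)" using AB by (simp add: algebra_simps)
  also have "\<dots> = F * inverse B" using a by simp
  finally show ?thesis unfolding GG_def F_def[symmetric] A_def[symmetric] B_def[symmetric]
    by simp
qed

lemma GG_nth: "GG f0 m $ n = (\<Sum>k=1..n. of_nat m ^ (k - 1) * (FF f0 ^ k) $ n)"
proof -
  define F where "F = FF f0"
  define A where "A = 1 - of_nat m * F"
  define P where "P = (\<Sum>k=1..n. of_nat m ^ (k - 1) * F ^ k)"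
  have a: "A * inverse A = 1" unfolding A_def F_def by (rule A_inv)
  have PA: "P * A = F - of_nat m ^ n * F ^ Suc n"
    unfolding P_def A_def
  proof (induction n)
    case (Suc n)
    have "(\<Sum>k=1..Suc n. of_nat m ^ (k - 1) * F ^ k) = (\<Sum>k=1..n. of_nat m ^ (k - 1) * F ^ k) + of_nat m ^ n * F ^ Suc n"
      by simp
    hence "(\<Sum>k=1..Suc n. of_nat m ^ (k - 1) * F ^ k) * (1 - of_nat m * F) = (F - of_nat m ^ n * F ^ Suc n) + of_nat m ^ n * F ^ Suc n * (1 - of_nat m * F)"
      using Suc by (simp add: distrib_right)
    also have "\<dots> = F - of_nat m ^ Suc n * F ^ Suc (Suc n)" by (simp add: algebra_simps)
    finally show ?case .
  qed simp
  have "(GG f0 m - P) * A = of_nat m ^ n * F ^ Suc n"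
    using PA a unfolding GG_def F_def[symmetric] A_def[symmetric]
    by (simp add: algebra_simps)
  hence "GG f0 m - P = of_nat m ^ n * F ^ Suc n * inverse A"
    by (metis a mult.assoc mult.right_neutral)
  also have "of_nat m ^ n * F ^ Suc n * inverse A
     = fps_X ^ Suc n * (of_nat m ^ n * Abs_fps (\<lambda>n. f0 (Suc n)) ^ Suc n * inverse A)"
    unfolding F_def FF_def power_mult_distrib by (simp only: mult_ac)
  finally have "(GG f0 m - P) $ n = 0"
    by (simp only: fps_X_power_mult_nth) simp
  hence "GG f0 m $ n = P $ n" by simp
  also have "P $ n = (\<Sum>k=1..n. of_nat m ^ (k - 1) * (F ^ k) $ n)"
    unfolding P_def fps_sum_nth by (simp add: fps_of_nat[symmetric])
  finally show ?thesis unfolding F_def .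
qed

lemma invert_cong: "(\<And>i. i \<ge> 1 \<Longrightarrow> g i = h i) \<Longrightarrow> n \<ge> 1 \<Longrightarrow> invert g n = invert h n"
proof (induction n rule: less_induct)
  case (less n)
  show ?case
    apply (subst (1 2) invert.simps)
    using less by (intro arg_cong2[where f="(+)"] sum.cong) auto
qed

lemma invert_GG: "(\<And>i. i \<ge> 1 \<Longrightarrow> g i = GG f0 m $ i) \<Longrightarrow> n \<ge> 1
   \<Longrightarrow> invert g n = GG f0 (Suc m) $ n"
proof (induction n rule: less_induct)
  case (less n)
  have z0: "GG f0 j $ 0 = 0" for j by (simp add: GG_def FF_nth)
  have "invert g n = g n + (\<Sum>i\<in>{1..<n}. g i * invert g (n - i))"
    by (subst invert.simps) (use less.prems in auto)
  also have "\<dots> = GG f0 m $ n + (\<Sum>i\<in>{1..<n}. GG f0 m $ i * GG f0 (Suc m) $ (n - i))"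
    using less by (intro arg_cong2[where f="(+)"] sum.cong) auto
  also have "(\<Sum>i\<in>{1..<n}. GG f0 m $ i * GG f0 (Suc m) $ (n - i))
      = (GG f0 m * GG f0 (Suc m)) $ n"
    unfolding fps_mult_nth
    by (rule sum.mono_neutral_left) (use z0 in \<open>auto simp: not_less_eq_eq\<close>)
  finally show ?case by (subst GG_rec) simp
qed

lemma fm_GG: "n \<ge> 1 \<Longrightarrow> fm f0 m n = GG f0 m $ n"
proof (induction m arbitrary: n)
  case 0
  then show ?case by (simp add: fm_def GG_def FF_nth)
next
  case (Suc m)
  show ?case unfolding fm_def funpow.simps o_def
    by (rule invert_GG) (use Suc in \<open>auto simp: fm_def\<close>)
qed

theorem proposition10:
  fixes f0 :: "nat \<Rightarrow> complex" and m n :: nat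
  assumes "m \<ge> 1" and "n \<ge> 1"
  shows "fm f0 m n = (\<Sum>i=1..n. of_nat m ^ (i - 1) * c1 f0 n i)"
  using assms by (simp add: fm_GG GG_nth c1_eq)

end
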